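(* Let $(X,\le)$ be a bicontinuous poset and let $C\subseteq X$ be a countable subset that is dense in the interval topology. Then: (i) the collection $\{(a,b): a,b\in C,\ a\ll b\}$ is a countable basis for the interval topology; thus separability of the interval topology implies second countability, and even complete metrizability if $X$ is globally hyperbolic; (ii) for every $x\in X$, the set $\Downarrow x\cap C$ contains a directed set with supremum $x$, and $\Uparrow x\cap C$ contains a filtered set with infimum $x$.
   Context: For a poset $(P,\sqsubseteq)$: a nonempty $S\subseteq P$ is directed if any two elements of $S$ have an upper bound in $S$, and filtered if any two elements of $S$ have a lower bound in $S$; $\bigsqcup S$ and $\bigwedge S$ denote supremum and infimum when they exist. For $x,y\in P$, $x\ll y$ iff for every directed $S\subseteq P$ that has a supremum, $y\sqsubseteq\bigsqcup S$ implies $x\sqsubseteq s$ for some $s\in S$. Put $\Downarrow x=\{a: a\ll x\}$, $\Uparrow x=\{a: x\ll a\}$. A basis of $P$ is a subset $B$ such that for every $x$, $B\cap\Downarrow x$ contains a directed set with supremum $x$; $P$ is continuous if it has a basis. A continuous poset $P$ is bicontinuous if (1) for all $x,y$: $x\ll y$ iff for every filtered $S\subseteq P$ having an infimum, $\bigwedge S\sqsubseteq x$ implies $s\sqsubseteq y$ for some $s\in S$; and (2) for every $x$, $\Uparrow x$ is filtered with infimum $x$. On a bicontinuous poset the sets $(a,b)=\{x: a\ll x\ll b\}$ form a basis for a topology, the interval topology. A globally hyperbolic poset is a bicontinuous poset $(X,\le)$ in which every closed interval $[a,b]=\{x: a\le x\le b\}$ is compact in the interval topology. *)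

theory Defs
  imports "HOL-Analysis.Analysis"
begin

definition directed :: "'a::order set \<Rightarrow> bool" where
  "directed S \<longleftrightarrow> S \<noteq> {} \<and> (\<forall>x\<in>S. \<forall>y\<in>S. \<exists>z\<in>S. x \<le> z \<and> y \<le> z)"

definition filtered :: "'a::order set \<Rightarrow> bool" where
  "filtered S \<longleftrightarrow> S \<noteq> {} \<and> (\<forall>x\<in>S. \<forall>y\<in>S. \<exists>z\<in>S. z \<le> x \<and> z \<le> y)"

definition is_sup :: "'a::order set \<Rightarrow> 'a \<Rightarrow> bool" where
  "is_sup S s \<longleftrightarrow> (\<forall>x\<in>S. x \<le> s) \<and> (\<forall>u. (\<forall>x\<in>S. x \<le> u) \<longrightarrow> s \<le> u)"

definition is_inf :: "'a::order set \<Rightarrow> 'a \<Rightarrow> bool" where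
  "is_inf S s \<longleftrightarrow> (\<forall>x\<in>S. s \<le> x) \<and> (\<forall>u. (\<forall>x\<in>S. u \<le> x) \<longrightarrow> u \<le> s)"

definition way_below :: "'a::order \<Rightarrow> 'a \<Rightarrow> bool" where
  "way_below x y \<longleftrightarrow>
     (\<forall>S s. directed S \<and> is_sup S s \<and> y \<le> s \<longrightarrow> (\<exists>d\<in>S. x \<le> d))"

definition ddown :: "'a::order \<Rightarrow> 'a set" where
  "ddown x = {a. way_below a x}"

definition uup :: "'a::order \<Rightarrow> 'a set" where
  "uup x = {a. way_below x a}"

definition is_basis :: "'a::order set \<Rightarrow> bool" where
  "is_basis B \<longleftrightarrow> (\<forall>x. \<exists>S. S \<subseteq> B \<inter> ddown x \<and> directed S \<and> is_sup S x)"

definition continuous_poset :: "'a::order itself \<Rightarrow> bool" where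
  "continuous_poset _ \<longleftrightarrow> (\<exists>B::'a set. is_basis B)"

definition bicontinuous :: "'a::order itself \<Rightarrow> bool" where
  "bicontinuous T \<longleftrightarrow> continuous_poset T \<and>
     (\<forall>x y::'a. way_below x y \<longleftrightarrow>
        (\<forall>S i. filtered S \<and> is_inf S i \<and> i \<le> x \<longrightarrow> (\<exists>s\<in>S. s \<le> y))) \<and>
     (\<forall>x::'a. filtered (uup x) \<and> is_inf (uup x) x)"

definition open_interval :: "'a::order \<Rightarrow> 'a \<Rightarrow> 'a set" where
  "open_interval a b = {x. way_below a x \<and> way_below x b}"

definition interval_topology :: "'a::order topology" where
  "interval_topology = topology_generated_by {open_interval a b | a b. True}"

definition globally_hyperbolic :: "'a::order itself \<Rightarrow> bool" where
  "globally_hyperbolic T \<longleftrightarrow> bicontinuous T \<and>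
     (\<forall>a b::'a. compactin interval_topology {x. a \<le> x \<and> x \<le> b})"

end

theory Submission
  imports Defs
begin

lemma urysohn_metrization:
  assumes reg: "regular_space X" and sc: "second_countable X" and hd: "Hausdorff_space X"
  shows "metrizable_space X"
proof -
  obtain B where cB: "countable B" and oB: "\<forall>V\<in>B. openin X V"
    and bB: "\<And>U x. openin X U \<Longrightarrow> x \<in> U \<Longrightarrow> \<exists>V\<in>B. x \<in> V \<and> V \<subseteq> U"
    using sc unfolding second_countable_def by metis
  have nor: "normal_space X"
    using reg sc regular_Lindelof_imp_normal_space second_countable_imp_Lindelof_space by blast
  define P where "P = {(U,V). U \<in> B \<and> V \<in> B \<and> X closure_of U \<subseteq> V}"
  have cP: "countable P"
  proof -
    have "P \<subseteq> B \<times> B" by (auto simp: P_def)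
    moreover have "countable (B \<times> B)" using cB by simp
    ultimately show ?thesis using countable_subset by blast
  qed
  have ex: "\<exists>f. continuous_map X (top_of_set {0..1::real}) f \<and> f ` (X closure_of fst p) \<subseteq> {0}
            \<and> f ` (topspace X - snd p) \<subseteq> {1}" if "p \<in> P" for p
  proof -
    obtain U V where p: "p = (U,V)" "U \<in> B" "V \<in> B" "X closure_of U \<subseteq> V"
      using \<open>p \<in> P\<close> by (auto simp: P_def)
    have "closedin X (topspace X - V)" using oB p by blast
    moreover have "disjnt (X closure_of U) (topspace X - V)" using p(4) by (auto simp: disjnt_def)
    ultimately obtain f where "continuous_map X (top_of_set {0..1::real}) f"
       "f ` (X closure_of U) \<subseteq> {0}" "f ` (topspace X - V) \<subseteq> {1}"
      using Urysohn_lemma[OF nor closedin_closure_of, of "topspace X - V" U 0 1] by auto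
    then show ?thesis using p by auto
  qed
  define F where "F p = (SOME f. continuous_map X (top_of_set {0..1::real}) f \<and>
      f ` (X closure_of fst p) \<subseteq> {0} \<and> f ` (topspace X - snd p) \<subseteq> {1})" for p
  have F: "continuous_map X (top_of_set {0..1::real}) (F p) \<and>
      F p ` (X closure_of fst p) \<subseteq> {0} \<and> F p ` (topspace X - snd p) \<subseteq> {1}" if "p \<in> P" for p
    unfolding F_def by (rule someI_ex[OF ex[OF that]])
  have sep: "\<exists>p\<in>P. F p x = 0 \<and> (\<forall>y \<in> topspace X. F p y < 1 \<longrightarrow> y \<in> W)"
    if Wo: "openin X W" "x \<in> W" for x W
  proof -
    obtain V where V: "V \<in> B" "x \<in> V" "V \<subseteq> W" using bB[OF Wo] by blast
    have oV: "openin X V" using oB V by blast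
    have c1: "closedin X (topspace X - V)" using oV by (rule closedin_diff[OF closedin_topspace])
    have c2: "x \<in> topspace X - (topspace X - V)" using V(2) openin_subset[OF oV] by blast
    obtain N where N0: "openin X N" "x \<in> N" "disjnt (topspace X - V) (X closure_of N)"
      using reg[unfolded regular_space, rule_format, OF conjI[OF c1 c2]] by blast
    have N: "openin X N" "x \<in> N" "X closure_of N \<subseteq> V"
      using N0 closure_of_subset_topspace[of X N] by (auto simp: disjnt_def)
    obtain U where U: "U \<in> B" "x \<in> U" "U \<subseteq> N" using bB[OF N(1) N(2)] by blast
    have "X closure_of U \<subseteq> V" using closure_of_mono[OF U(3)] N(3) by (rule order_trans)
    then have pP: "(U,V) \<in> P" using U V by (auto simp: P_def)
    have "U \<subseteq> X closure_of U" using U(1) oB by (intro closure_of_subset openin_subset) blast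
    then have "x \<in> X closure_of U" using U(2) by blast
    then have "F (U,V) x = 0" using F[OF pP] by (simp add: image_subset_iff)
    moreover have "y \<in> W" if "y \<in> topspace X" "F (U,V) y < 1" for y
    proof (rule ccontr)
      assume "y \<notin> W"
      then have "y \<in> topspace X - V" using that V(3) by blast
      then have "F (U,V) y = 1" using F[OF pP] by (simp add: image_subset_iff)
      then show False using that(2) by simp
    qed
    ultimately show ?thesis using pP by blast
  qed
  define e where "e \<equiv> \<lambda>x. \<lambda>p\<in>P. F p x"
  define Y where "Y = product_topology (\<lambda>p. top_of_set {0..1::real}) P"
  have inj: "e x \<noteq> e y" if xy: "x \<noteq> y" "x \<in> topspace X" "y \<in> topspace X" for x y
  proof -
    have "openin X (topspace X - {y})"
      using hd xy by (simp add: closedin_Hausdorff_singleton openin_diff)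
    then obtain p where p: "p \<in> P" "F p x = 0" "\<forall>z \<in> topspace X. F p z < 1 \<longrightarrow> z \<in> topspace X - {y}"
      using sep xy by blast
    then have "F p y \<noteq> F p x" using xy by auto
    then show ?thesis using p unfolding e_def by (metis restrict_apply')
  qed
  then have "inj_on e (topspace X)"
    by (meson inj_onI)
  then obtain e' where e': "\<And>x. x \<in> topspace X \<Longrightarrow> e' (e x) = x"
    by (metis inv_into_f_f)
  have "continuous_map (subtopology Y (e ` topspace X)) X e'"
  proof (clarsimp simp add: Y_def continuous_map_atin limitin_atin openin_subtopology_alt e')
    fix x U
    assume ex01: "e x \<in> P \<rightarrow>\<^sub>E {0..1}" and "x \<in> topspace X" and oU: "openin X U" and "x \<in> U"
    obtain p where p: "p \<in> P" "F p x = 0" "\<forall>z \<in> topspace X. F p z < 1 \<longrightarrow> z \<in> U"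
      using sep[OF oU \<open>x \<in> U\<close>] by blast
    define W where "W = PiE P (\<lambda>q. if q = p then {0..<1} else {0..1::real})"
    have opn: "openin (top_of_set {0..1}) {0..<1::real}"
      using open_real_greaterThanLessThan[of "-1" 1] by (force simp: openin_open)
    have fin: "{q \<in> P. (if q = p then {0..<1} else {0..1}) \<noteq> topspace (top_of_set {0..1::real})} \<subseteq> {p}"
      by auto
    have Wo: "openin (product_topology (\<lambda>f. top_of_set {0..1::real}) P) W"
    proof -
      have "finite {q \<in> P. (if q = p then {0..<1} else {0..1}) \<noteq> topspace (top_of_set {0..1::real})}"
        by (rule finite_subset[OF fin]) simp
      moreover have "\<forall>q\<in>P. openin (top_of_set {0..1::real}) (if q = p then {0..<1} else {0..1})"
        using opn by simp
      ultimately show ?thesis unfolding W_def openin_PiE_gen by blast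
    qed
    have "e x q \<in> (if q = p then {0..<1} else {0..1})" if "q \<in> P" for q
    proof (cases "q = p")
      case True then show ?thesis using p by (simp add: e_def)
    next
      case False then show ?thesis using PiE_mem[OF ex01 that] by simp
    qed
    moreover have "e x \<in> extensional P" using ex01 by (simp add: PiE_def)
    ultimately have exW: "e x \<in> W" unfolding W_def by (simp add: PiE_iff)
    have ey: "e y = e x"
      if "y \<notin> U" and eyW: "e y \<in> W" and y: "y \<in> topspace X" for y
    proof -
      have "e y p \<in> (if p = p then {0..<1} else {0..1::real})" using PiE_mem[OF eyW[unfolded W_def] p(1)] .
      then have "e y p \<in> {0..<1}" by simp
      then have "F p y < 1" using p by (simp add: e_def)
      with p y \<open>y \<notin> U\<close> show ?thesis by blast
    qed
    have "e' ` (e ` topspace X \<inter> W - {e x}) \<subseteq> U"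
    proof
      fix z assume "z \<in> e' ` (e ` topspace X \<inter> W - {e x})"
      then obtain y where y: "y \<in> topspace X" "e y \<in> W" "e y \<noteq> e x" "z = e' (e y)" by blast
      then have "z = y" using e' by simp
      then show "z \<in> U" using ey y by blast
    qed
    then show "\<exists>W. openin (product_topology (\<lambda>f. top_of_set {0..1}) P) W \<and> e x \<in> W \<and> e' ` (e ` topspace X \<inter> W - {e x}) \<subseteq> U"
      using Wo exW by blast
  qed
  moreover have ce: "continuous_map X Y e"
    unfolding Y_def continuous_map_componentwise
  proof (intro conjI ballI)
    show "e ` topspace X \<subseteq> extensional P" by (auto simp: e_def)
    fix k assume k: "k \<in> P"
    then show "continuous_map X (top_of_set {0..1}) (\<lambda>x. e x k)" using F[OF k] by (simp add: e_def)
  qed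
  ultimately have "homeomorphic_maps X (subtopology Y (e ` topspace X)) e e'"
    unfolding homeomorphic_maps_def continuous_map_in_subtopology
    using e' by auto
  then have emb: "homeomorphic_map X (subtopology Y (e ` topspace X)) e"
    using homeomorphic_map_maps by blast
  have "countable {i \<in> P. \<not> (\<exists>a. topspace (top_of_set {0..1::real}) \<subseteq> {a})}"
    by (rule countable_subset[OF _ cP]) blast
  moreover have "metrizable_space (top_of_set {0..1::real})"
    by (rule metrizable_space_subtopology[OF metrizable_space_euclidean])
  ultimately have "metrizable_space Y"
    unfolding Y_def metrizable_space_product_topology by blast
  then have "metrizable_space (subtopology Y (e ` topspace X))"
    by (rule metrizable_space_subtopology)
  then show ?thesis
    using homeomorphic_metrizable_space[OF homeomorphic_map_imp_homeomorphic_space[OF emb]] by blast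
qed
lemma wb_le: "way_below x y \<Longrightarrow> x \<le> (y::'a::order)"
proof -
  assume "way_below x y"
  moreover have "directed {y}" "is_sup {y} y" by (auto simp: directed_def is_sup_def)
  ultimately show ?thesis unfolding way_below_def by blast
qed

lemma wb_mono: "a \<le> x \<Longrightarrow> way_below x y \<Longrightarrow> y \<le> b \<Longrightarrow> way_below a (b::'a::order)"
  unfolding way_below_def by (meson order_trans)

context
  fixes T :: "'a::order itself"
  assumes bic: "bicontinuous T"
begin

lemma cont: "\<exists>S. S \<subseteq> ddown (x::'a) \<and> directed S \<and> is_sup S x"
proof -
  obtain B :: "'a set" where "is_basis B" using bic unfolding bicontinuous_def continuous_poset_def by blast
  then show ?thesis unfolding is_basis_def by blast
qed

lemma uup_filt: "filtered (uup (x::'a))" and uup_inf: "is_inf (uup x) x"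
  using bic unfolding bicontinuous_def by blast+

lemma ddown_ub:
  assumes "way_below a1 (x::'a)" "way_below a2 x"
  shows "\<exists>a. way_below a x \<and> a1 \<le> a \<and> a2 \<le> a"
proof -
  obtain S where S: "S \<subseteq> ddown x" "directed S" "is_sup S x" using cont by blast
  obtain s1 where s1: "s1 \<in> S" "a1 \<le> s1" using assms(1) S unfolding way_below_def by blast
  obtain s2 where s2: "s2 \<in> S" "a2 \<le> s2" using assms(2) S unfolding way_below_def by blast
  obtain s where s: "s \<in> S" "s1 \<le> s" "s2 \<le> s" using S(2) s1 s2 unfolding directed_def by blast
  have "way_below s x" using S s by (auto simp: ddown_def)
  then show ?thesis using s s1 s2 order_trans by blast
qed

lemma uup_lb:
  assumes "way_below (x::'a) b1" "way_below x b2"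
  shows "\<exists>b. way_below x b \<and> b \<le> b1 \<and> b \<le> b2"
  using uup_filt[of x] assms unfolding filtered_def uup_def by blast

lemma interp:
  assumes "way_below (x::'a) y"
  shows "\<exists>z. way_below x z \<and> way_below z y"
proof -
  define D where "D = {a. \<exists>c. way_below a c \<and> way_below c y}"
  have "directed D"
    unfolding directed_def
  proof
    obtain S where S: "S \<subseteq> ddown y" "directed S" "is_sup S y" using cont by blast
    then obtain c where c: "c \<in> S" unfolding directed_def by blast
    obtain S' where S': "S' \<subseteq> ddown c" "directed S'" "is_sup S' c" using cont by blast
    then obtain a where a: "a \<in> S'" unfolding directed_def by blast
    have "a \<in> D" using S c S' a unfolding D_def ddown_def by blast
    then show "D \<noteq> {}" by blast
  next
    show "\<forall>a1\<in>D. \<forall>a2\<in>D. \<exists>z\<in>D. a1 \<le> z \<and> a2 \<le> z"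
    proof (intro ballI)
      fix a1 a2 assume "a1 \<in> D" "a2 \<in> D"
      then obtain c1 c2 where c: "way_below a1 c1" "way_below c1 y" "way_below a2 c2" "way_below c2 y"
        unfolding D_def by blast
      obtain s where s: "way_below s y" "c1 \<le> s" "c2 \<le> s" using ddown_ub[OF c(2) c(4)] by blast
      have "way_below a1 s" "way_below a2 s" using c s wb_mono by blast+
      then obtain t where t: "way_below t s" "a1 \<le> t" "a2 \<le> t" using ddown_ub by blast
      have "t \<in> D" using t s unfolding D_def by blast
      then show "\<exists>z\<in>D. a1 \<le> z \<and> a2 \<le> z" using t by blast
    qed
  qed
  moreover have "is_sup D y"
    unfolding is_sup_def
  proof (intro conjI allI impI ballI)
    fix a assume "a \<in> D"
    then show "a \<le> y" unfolding D_def using wb_le order_trans by blast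
  next
    fix u assume u: "\<forall>a\<in>D. a \<le> u"
    have cu: "c \<le> u" if c: "way_below c y" for c
    proof -
      obtain S' where S': "S' \<subseteq> ddown c" "directed S'" "is_sup S' c" using cont by blast
      have "\<forall>a\<in>S'. a \<le> u" using S' c u unfolding D_def ddown_def by blast
      then show ?thesis using S'(3) unfolding is_sup_def by blast
    qed
    obtain S where S: "S \<subseteq> ddown y" "directed S" "is_sup S y" using cont by blast
    have "\<forall>a\<in>S. a \<le> u" using S cu unfolding ddown_def by blast
    then show "y \<le> u" using S(3) unfolding is_sup_def by blast
  qed
  ultimately obtain d where "d \<in> D" "x \<le> d" using assms unfolding way_below_def by blast
  then show ?thesis unfolding D_def using wb_mono by blast
qed

lemma topspace_it: "topspace (interval_topology :: 'a topology) = UNIV"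
proof -
  have "x \<in> \<Union>{open_interval a b | a b. True}" for x :: 'a
  proof -
    obtain S where S: "S \<subseteq> ddown x" "directed S" "is_sup S x" using cont by blast
    then obtain a where "a \<in> S" unfolding directed_def by blast
    then have a: "way_below a x" using S by (auto simp: ddown_def)
    obtain b where "b \<in> uup x" using uup_filt[of x] unfolding filtered_def by blast
    then have b: "way_below x b" by (simp add: uup_def)
    have "x \<in> open_interval a b" using a b by (simp add: open_interval_def)
    then show ?thesis by blast
  qed
  then show ?thesis unfolding interval_topology_def topology_generated_by_topspace by blast
qed

lemma oi_open: "openin (interval_topology :: 'a topology) (open_interval a b)"
  unfolding interval_topology_def by (rule topology_generated_by_Basis) blast

lemma nbhd:
  assumes "openin (interval_topology :: 'a topology) U" "x \<in> U"
  shows "\<exists>a b. way_below a x \<and> way_below x b \<and> open_interval a b \<subseteq> U"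
proof -
  have "generate_topology_on {open_interval a b | a b. True} U"
    using assms(1) unfolding interval_topology_def openin_topology_generated_by_iff .
  then show ?thesis using assms(2)
  proof (induction arbitrary: x)
    case Empty then show ?case by simp
  next
    case (Int U1 U2)
    obtain a1 b1 where 1: "way_below a1 x" "way_below x b1" "open_interval a1 b1 \<subseteq> U1" using Int by blast
    obtain a2 b2 where 2: "way_below a2 x" "way_below x b2" "open_interval a2 b2 \<subseteq> U2" using Int by blast
    obtain a where a: "way_below a x" "a1 \<le> a" "a2 \<le> a" using ddown_ub[OF 1(1) 2(1)] by blast
    obtain b where b: "way_below x b" "b \<le> b1" "b \<le> b2" using uup_lb[OF 1(2) 2(2)] by blast
    have "open_interval a b \<subseteq> open_interval a1 b1" "open_interval a b \<subseteq> open_interval a2 b2"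
      using a b unfolding open_interval_def by (auto intro: wb_mono)
    then show ?case using a b 1 2 by blast
  next
    case (UN K)
    then obtain k where "k \<in> K" "x \<in> k" by blast
    then show ?case using UN by blast
  next
    case (Basis s)
    then obtain a b where "s = open_interval a b" by blast
    then show ?case using Basis by (auto simp: open_interval_def)
  qed
qed

lemma dense_pt:
  assumes dense: "interval_topology closure_of C = topspace (interval_topology :: 'a topology)"
    and ab: "way_below a (b::'a)"
  shows "\<exists>c\<in>C. way_below a c \<and> way_below c b"
proof -
  obtain z where z: "way_below a z" "way_below z b" using interp[OF ab] by blast
  have "z \<in> interval_topology closure_of C" using dense topspace_it by simp
  moreover have "z \<in> open_interval a b" using z by (simp add: open_interval_def)
  ultimately obtain c where "c \<in> C" "c \<in> open_interval a b"
    using oi_open unfolding in_closure_of by blast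
  then show ?thesis by (auto simp: open_interval_def)
qed

lemma basis_C:
  assumes dense: "interval_topology closure_of C = topspace (interval_topology :: 'a topology)"
    and U: "openin (interval_topology :: 'a topology) U" "x \<in> U"
  shows "\<exists>V \<in> {open_interval a b | a b. a \<in> C \<and> b \<in> C \<and> way_below a b}. x \<in> V \<and> V \<subseteq> U"
proof -
  obtain a b where ab: "way_below a x" "way_below x b" "open_interval a b \<subseteq> U" using nbhd[OF U] by blast
  obtain c1 where c1: "c1 \<in> C" "way_below a c1" "way_below c1 x" using dense_pt[OF dense ab(1)] by blast
  obtain c2 where c2: "c2 \<in> C" "way_below x c2" "way_below c2 b" using dense_pt[OF dense ab(2)] by blast
  have "way_below c1 c2" using c1 c2 wb_le wb_mono by blast
  moreover have "open_interval c1 c2 \<subseteq> open_interval a b"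
    using c1 c2 unfolding open_interval_def by (auto intro: wb_mono dest: wb_le)
  moreover have "x \<in> open_interval c1 c2" using c1 c2 by (simp add: open_interval_def)
  ultimately show ?thesis using c1 c2 ab by blast
qed

lemma hd_aux:
  assumes "\<not> x \<le> (y::'a)"
  shows "\<exists>U V. openin interval_topology U \<and> openin interval_topology V \<and> x \<in> U \<and> y \<in> V \<and> disjnt U V"
proof -
  obtain S where S: "S \<subseteq> ddown x" "directed S" "is_sup S x" using cont by blast
  have "\<exists>a\<in>S. \<not> a \<le> y"
  proof (rule ccontr)
    assume "\<not> ?thesis"
    then have "\<forall>a\<in>S. a \<le> y" by blast
    then have "x \<le> y" using S(3) unfolding is_sup_def by blast
    then show False using assms by blast
  qed
  then obtain a where a: "way_below a x" "\<not> a \<le> y" using S(1) unfolding ddown_def by blast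
  have "\<exists>b\<in>uup y. \<not> a \<le> b"
  proof (rule ccontr)
    assume "\<not> ?thesis"
    then have "\<forall>b\<in>uup y. a \<le> b" by blast
    then have "a \<le> y" using uup_inf[of y] unfolding is_inf_def by blast
    then show False using a by blast
  qed
  then obtain b where b: "way_below y b" "\<not> a \<le> b" unfolding uup_def by blast
  obtain b1 where "b1 \<in> uup x" using uup_filt[of x] unfolding filtered_def by blast
  then have b1: "way_below x b1" by (simp add: uup_def)
  obtain S2 where S2: "S2 \<subseteq> ddown y" "directed S2" "is_sup S2 y" using cont by blast
  then obtain a2 where "a2 \<in> S2" unfolding directed_def by blast
  then have a2: "way_below a2 y" using S2 by (auto simp: ddown_def)
  have "disjnt (open_interval a b1) (open_interval a2 b)"
    unfolding disjnt_def open_interval_def using b(2) wb_le order_trans by blast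
  moreover have "x \<in> open_interval a b1" "y \<in> open_interval a2 b"
    using a b1 a2 b by (auto simp: open_interval_def)
  ultimately show ?thesis using oi_open by blast
qed

lemma hd: "Hausdorff_space (interval_topology :: 'a topology)"
  unfolding Hausdorff_space_def
proof (intro allI impI)
  fix x y :: 'a assume "x \<in> topspace interval_topology \<and> y \<in> topspace interval_topology \<and> x \<noteq> y"
  then have "\<not> x \<le> y \<or> \<not> y \<le> x" by auto
  then show "\<exists>U V. openin interval_topology U \<and> openin interval_topology V \<and> x \<in> U \<and> y \<in> V \<and> disjnt U V"
  proof
    assume "\<not> x \<le> y" then show ?thesis using hd_aux by blast
  next
    assume "\<not> y \<le> x" then obtain U V where "openin interval_topology U" "openin interval_topology V"
      "y \<in> U" "x \<in> V" "disjnt U V" using hd_aux by blast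
    then show ?thesis using disjnt_sym by blast
  qed
qed

lemma lc:
  assumes gh: "globally_hyperbolic TYPE('a)"
  shows "locally_compact_space (interval_topology :: 'a topology)"
  unfolding locally_compact_space_def
proof
  fix x :: 'a
  obtain S where S: "S \<subseteq> ddown x" "directed S" "is_sup S x" using cont by blast
  then obtain a where "a \<in> S" unfolding directed_def by blast
  then have a: "way_below a x" using S by (auto simp: ddown_def)
  obtain b where "b \<in> uup x" using uup_filt[of x] unfolding filtered_def by blast
  then have b: "way_below x b" by (simp add: uup_def)
  have "compactin interval_topology {z. a \<le> z \<and> z \<le> b}" using gh unfolding globally_hyperbolic_def by blast
  moreover have "open_interval a b \<subseteq> {z. a \<le> z \<and> z \<le> b}" unfolding open_interval_def using wb_le by blast
  moreover have "x \<in> open_interval a b" using a b by (simp add: open_interval_def)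
  ultimately show "\<exists>U K. openin interval_topology U \<and> compactin interval_topology K \<and> x \<in> U \<and> U \<subseteq> K"
    using oi_open by blast
qed

lemma part2:
  assumes dense: "interval_topology closure_of C = topspace (interval_topology :: 'a topology)"
  shows "(\<exists>S. S \<subseteq> ddown x \<inter> C \<and> directed S \<and> is_sup S (x::'a)) \<and>
         (\<exists>S. S \<subseteq> uup x \<inter> C \<and> filtered S \<and> is_inf S x)"
proof
  have key: "\<exists>c\<in>C. way_below c x \<and> a \<le> c" if ax: "way_below a x" for a
  proof -
    obtain a' where a': "way_below a a'" "way_below a' x" using interp[OF ax] by blast
    obtain c where "c \<in> C" "way_below a c" "way_below c a'" using dense_pt[OF dense a'(1)] by blast
    then show ?thesis using a' wb_le wb_mono by blast
  qed
  obtain S0 where S0: "S0 \<subseteq> ddown x" "directed S0" "is_sup S0 x" using cont by blast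
  then obtain a0 where "a0 \<in> S0" unfolding directed_def by blast
  then have a0: "way_below a0 x" using S0 by (auto simp: ddown_def)
  have "directed (ddown x \<inter> C)"
    unfolding directed_def
  proof
    show "ddown x \<inter> C \<noteq> {}" using key[OF a0] by (auto simp: ddown_def)
    show "\<forall>c1\<in>ddown x \<inter> C. \<forall>c2\<in>ddown x \<inter> C. \<exists>z\<in>ddown x \<inter> C. c1 \<le> z \<and> c2 \<le> z"
    proof (intro ballI)
      fix c1 c2 assume "c1 \<in> ddown x \<inter> C" "c2 \<in> ddown x \<inter> C"
      then have "way_below c1 x" "way_below c2 x" by (auto simp: ddown_def)
      then obtain a where a: "way_below a x" "c1 \<le> a" "c2 \<le> a" using ddown_ub by blast
      obtain c where "c \<in> C" "way_below c x" "a \<le> c" using key[OF a(1)] by blast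
      then show "\<exists>z\<in>ddown x \<inter> C. c1 \<le> z \<and> c2 \<le> z" using a by (auto simp: ddown_def intro: order_trans)
    qed
  qed
  moreover have "is_sup (ddown x \<inter> C) x"
    unfolding is_sup_def
  proof (intro conjI allI impI ballI)
    fix c assume "c \<in> ddown x \<inter> C" then show "c \<le> x" by (auto simp: ddown_def wb_le)
  next
    fix u assume u: "\<forall>c\<in>ddown x \<inter> C. c \<le> u"
    have "a \<le> u" if "a \<in> S0" for a
    proof -
      have "way_below a x" using that S0 by (auto simp: ddown_def)
      then obtain c where "c \<in> C" "way_below c x" "a \<le> c" using key by blast
      then show ?thesis using u by (auto simp: ddown_def intro: order_trans)
    qed
    then show "x \<le> u" using S0(3) unfolding is_sup_def by blast
  qed
  ultimately show "\<exists>S. S \<subseteq> ddown x \<inter> C \<and> directed S \<and> is_sup S x" by blast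
next
  have key: "\<exists>c\<in>C. way_below x c \<and> c \<le> b" if xb: "way_below x b" for b
  proof -
    obtain b' where b': "way_below x b'" "way_below b' b" using interp[OF xb] by blast
    obtain c where "c \<in> C" "way_below b' c" "way_below c b" using dense_pt[OF dense b'(2)] by blast
    then show ?thesis using b' wb_le wb_mono by blast
  qed
  obtain b0 where "b0 \<in> uup x" using uup_filt[of x] unfolding filtered_def by blast
  then have b0: "way_below x b0" by (simp add: uup_def)
  have "filtered (uup x \<inter> C)"
    unfolding filtered_def
  proof
    show "uup x \<inter> C \<noteq> {}" using key[OF b0] by (auto simp: uup_def)
    show "\<forall>c1\<in>uup x \<inter> C. \<forall>c2\<in>uup x \<inter> C. \<exists>z\<in>uup x \<inter> C. z \<le> c1 \<and> z \<le> c2"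
    proof (intro ballI)
      fix c1 c2 assume "c1 \<in> uup x \<inter> C" "c2 \<in> uup x \<inter> C"
      then have "way_below x c1" "way_below x c2" by (auto simp: uup_def)
      then obtain b where b: "way_below x b" "b \<le> c1" "b \<le> c2" using uup_lb by blast
      obtain c where "c \<in> C" "way_below x c" "c \<le> b" using key[OF b(1)] by blast
      then show "\<exists>z\<in>uup x \<inter> C. z \<le> c1 \<and> z \<le> c2" using b by (auto simp: uup_def intro: order_trans)
    qed
  qed
  moreover have "is_inf (uup x \<inter> C) x"
    unfolding is_inf_def
  proof (intro conjI allI impI ballI)
    fix c assume "c \<in> uup x \<inter> C" then show "x \<le> c" by (auto simp: uup_def wb_le)
  next
    fix u assume u: "\<forall>c\<in>uup x \<inter> C. u \<le> c"
    have "u \<le> b" if "b \<in> uup x" for b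
    proof -
      have "way_below x b" using that by (auto simp: uup_def)
      then obtain c where "c \<in> C" "way_below x c" "c \<le> b" using key by blast
      then show ?thesis using u by (auto simp: uup_def intro: order_trans)
    qed
    then show "u \<le> x" using uup_inf[of x] unfolding is_inf_def by blast
  qed
  ultimately show "\<exists>S. S \<subseteq> uup x \<inter> C \<and> filtered S \<and> is_inf S x" by blast
qed

lemma countable_basis:
  assumes cnt: "countable C"
  shows "countable {open_interval a b | a b. a \<in> C \<and> b \<in> C \<and> way_below (a::'a) b}"
proof -
  have "{open_interval a b | a b. a \<in> C \<and> b \<in> C \<and> way_below a b} \<subseteq> (\<lambda>p. open_interval (fst p) (snd p)) ` (C \<times> C)"
  proof
    fix V assume "V \<in> {open_interval a b | a b. a \<in> C \<and> b \<in> C \<and> way_below a b}"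
    then obtain a b where ab: "V = open_interval a b" "a \<in> C" "b \<in> C" by blast
    then have "(a,b) \<in> C \<times> C" by simp
    then show "V \<in> (\<lambda>p. open_interval (fst p) (snd p)) ` (C \<times> C)"
      by (rule rev_image_eqI) (simp add: ab(1))
  qed
  moreover have "countable ((\<lambda>p. open_interval (fst p) (snd p)) ` (C \<times> C))"
    by (rule countable_image) (simp add: cnt)
  ultimately show ?thesis by (rule countable_subset)
qed

lemma basis_open:
  "\<forall>V \<in> {open_interval a b | a b. a \<in> C \<and> b \<in> C \<and> way_below a b}. openin (interval_topology :: 'a topology) V"
proof
  fix V assume "V \<in> {open_interval a b | a b. a \<in> C \<and> b \<in> C \<and> way_below (a::'a) b}"
  then obtain a b where "V = open_interval a b" by blast
  then show "openin interval_topology V" using oi_open by simp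
qed

lemma basis_C':
  assumes dense: "interval_topology closure_of C = topspace (interval_topology :: 'a topology)"
  shows "\<forall>U x. openin (interval_topology :: 'a topology) U \<and> x \<in> U \<longrightarrow>
              (\<exists>V \<in> {open_interval a b | a b. a \<in> C \<and> b \<in> C \<and> way_below a b}. x \<in> V \<and> V \<subseteq> U)"
proof (intro allI impI)
  fix U x assume "openin (interval_topology :: 'a topology) U \<and> x \<in> U"
  then show "\<exists>V \<in> {open_interval a b | a b. a \<in> C \<and> b \<in> C \<and> way_below a b}. x \<in> V \<and> V \<subseteq> U"
    using basis_C[OF dense] by blast
qed

lemma sc_of_dense:
  assumes cnt: "countable C"
    and dense: "interval_topology closure_of C = topspace (interval_topology :: 'a topology)"
  shows "second_countable (interval_topology :: 'a topology)"
  unfolding second_countable_def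
proof (rule exI, intro conjI)
  show "countable {open_interval a b | a b. a \<in> C \<and> b \<in> C \<and> way_below (a::'a) b}"
    by (rule countable_basis[OF cnt])
  show "\<forall>V \<in> {open_interval a b | a b. a \<in> C \<and> b \<in> C \<and> way_below (a::'a) b}. openin interval_topology V"
    by (rule basis_open)
  show "\<forall>U x. openin (interval_topology :: 'a topology) U \<and> x \<in> U \<longrightarrow>
              (\<exists>V \<in> {open_interval a b | a b. a \<in> C \<and> b \<in> C \<and> way_below a b}. x \<in> V \<and> V \<subseteq> U)"
    by (rule basis_C'[OF dense])
qed

end

theorem mainTheorem2:
  fixes C :: "'a::order set"
  assumes bic: "bicontinuous TYPE('a)"
    and cnt: "countable C"
    and dense: "interval_topology closure_of C = topspace interval_topology"
  shows "(countable {open_interval a b | a b. a \<in> C \<and> b \<in> C \<and> way_below a b} \<and>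
          (\<forall>V \<in> {open_interval a b | a b. a \<in> C \<and> b \<in> C \<and> way_below a b}.
              openin interval_topology V) \<and>
          (\<forall>U x. openin interval_topology U \<and> x \<in> U \<longrightarrow>
              (\<exists>V \<in> {open_interval a b | a b. a \<in> C \<and> b \<in> C \<and> way_below a b}.
                  x \<in> V \<and> V \<subseteq> U)))
       \<and> (separable_space (interval_topology :: 'a topology) \<longrightarrow>
            second_countable (interval_topology :: 'a topology))
       \<and> (globally_hyperbolic TYPE('a) \<longrightarrow>
            completely_metrizable_space (interval_topology :: 'a topology))
       \<and> (\<forall>x. (\<exists>S. S \<subseteq> ddown x \<inter> C \<and> directed S \<and> is_sup S x) \<and>
               (\<exists>S. S \<subseteq> uup x \<inter> C \<and> filtered S \<and> is_inf S x))"
proof -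
  have A: "countable {open_interval a b | a b. a \<in> C \<and> b \<in> C \<and> way_below a b}"
    by (rule countable_basis[OF bic cnt])
  have B: "\<forall>V \<in> {open_interval a b | a b. a \<in> C \<and> b \<in> C \<and> way_below a b}.
              openin interval_topology V"
    by (rule basis_open[OF bic])
  have Cc: "\<forall>U x. openin interval_topology U \<and> x \<in> U \<longrightarrow>
              (\<exists>V \<in> {open_interval a b | a b. a \<in> C \<and> b \<in> C \<and> way_below a b}.
                  x \<in> V \<and> V \<subseteq> U)"
    by (rule basis_C'[OF bic dense])
  have D: "separable_space (interval_topology :: 'a topology) \<longrightarrow>
            second_countable (interval_topology :: 'a topology)"
  proof
    assume "separable_space (interval_topology :: 'a topology)"
    then obtain D :: "'a set" where "countable D" "interval_topology closure_of D = topspace interval_topology"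
      unfolding separable_space_def by blast
    then show "second_countable (interval_topology :: 'a topology)" by (rule sc_of_dense[OF bic])
  qed
  have E: "completely_metrizable_space (interval_topology :: 'a topology)"
    if gh: "globally_hyperbolic TYPE('a)"
  proof -
    have sc: "second_countable (interval_topology :: 'a topology)" by (rule sc_of_dense[OF bic cnt dense])
    have l: "locally_compact_space (interval_topology :: 'a topology)" by (rule lc[OF bic gh])
    have h: "Hausdorff_space (interval_topology :: 'a topology)" by (rule hd[OF bic])
    have r: "regular_space (interval_topology :: 'a topology)"
      by (rule locally_compact_Hausdorff_imp_regular_space[OF l h])
    have "metrizable_space (interval_topology :: 'a topology)"
      by (rule urysohn_metrization[OF r sc h])
    then show ?thesis using l by (rule locally_compact_imp_completely_metrizable_space)
  qed
  have F: "\<forall>x. (\<exists>S. S \<subseteq> ddown x \<inter> C \<and> directed S \<and> is_sup S x) \<and>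
               (\<exists>S. S \<subseteq> uup x \<inter> C \<and> filtered S \<and> is_inf S x)"
    using part2[OF bic dense] by blast
  show ?thesis
    apply (intro conjI)
    using A B Cc D E F by blast+
qed

end
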